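(* Let $\lambda,\mu,\theta>0$, $\alpha\in\mathbb{R}$ and $\hat\lambda,\hat\mu,\hat\theta,\hat\alpha\in\mathbb{R}$, and let $\epsilon$ be a small parameter. Consider the delay differential system, with delay $\Delta>0$, $$\dot q_1(t) = (\lambda+\epsilon\hat\lambda)\,\frac{\exp\big(-(\theta+\epsilon\hat\theta)q_1(t-\Delta)+(\alpha+\epsilon\hat\alpha)\big)}{\exp\big(-(\theta+\epsilon\hat\theta)q_1(t-\Delta)+(\alpha+\epsilon\hat\alpha)\big)+\exp\big(-\theta q_2(t-\Delta)+\alpha\big)} - (\mu+\epsilon\hat\mu)\,q_1(t),$$ $$\dot q_2(t) = \lambda\,\frac{\exp\big(-\theta q_2(t-\Delta)+\alpha\big)}{\exp\big(-(\theta+\epsilon\hat\theta)q_1(t-\Delta)+(\alpha+\epsilon\hat\alpha)\big)+\exp\big(-\theta q_2(t-\Delta)+\alpha\big)} - \mu\,q_2(t).$$ Then this system has an approximate (up to order $\epsilon^2$) equilibrium point (constant solution) $$(q_1^*,q_2^* )=\Big(\frac{\lambda}{2\mu}+a\epsilon+O(\epsilon^2),\ \frac{\lambda}{2\mu}+b\epsilon+O(\epsilon^2)\Big),$$ where $$a=\frac{\lambda\theta+4\mu}{4\mu(\lambda\theta+2\mu)}\hat\lambda-\frac{\lambda(\lambda\theta+4\mu)}{4\mu^2(\lambda\theta+2\mu)}\hat\mu-\frac{\lambda^2}{4\mu(\lambda\theta+2\mu)}\hat\theta+\frac{\lambda}{2(\lambda\theta+2\mu)}\hat\alpha,$$ $$b=\frac{\lambda\theta}{4\mu(\lambda\theta+2\mu)}\hat\lambda-\frac{\lambda^2\theta}{4\mu^2(\lambda\theta+2\mu)}\hat\mu+\frac{\lambda^2}{4\mu(\lambda\theta+2\mu)}\hat\theta-\frac{\lambda}{2(\lambda\theta+2\mu)}\hat\alpha;$$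 that is, substituting these constants into the right-hand sides makes them vanish up to $O(\epsilon^2)$.
   Context: $q_1(t),q_2(t)$ are fluid queue lengths of two infinite-server queues; $\lambda$ is the arrival rate, $\mu$ the service rate, $\theta$ the customer sensitivity to queue length, $\alpha$ the preference parameter; the hatted quantities are perturbations applied (scaled by $\epsilon$) to the parameters of the first queue. Initial data are continuous functions on $[-\Delta,0]$. *)

theory Defs
  imports Complex_Main "HOL-Library.Landau_Symbols"
begin

text \<open>Right-hand sides of the perturbed delay system. Arguments: perturbation
 parameter eps, delayed values d1 = q1(t - Delta), d2 = q2(t - Delta), and the
 current values x1 = q1(t), x2 = q2(t).\<close>

definition rhs1 :: "real \<Rightarrow> real \<Rightarrow> real \<Rightarrow> real \<Rightarrow> real \<Rightarrow> real \<Rightarrow> real \<Rightarrow> real \<Rightarrow> real \<Rightarrow> real \<Rightarrow> real \<Rightarrow> real \<Rightarrow> real \<Rightarrow> real" where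
  "rhs1 lam mu th al lh mh thh ah eps d1 d2 x1 x2 =
     (lam + eps * lh) *
       (exp (- (th + eps * thh) * d1 + (al + eps * ah)) /
        (exp (- (th + eps * thh) * d1 + (al + eps * ah)) + exp (- th * d2 + al)))
     - (mu + eps * mh) * x1"

definition rhs2 :: "real \<Rightarrow> real \<Rightarrow> real \<Rightarrow> real \<Rightarrow> real \<Rightarrow> real \<Rightarrow> real \<Rightarrow> real \<Rightarrow> real \<Rightarrow> real \<Rightarrow> real" where
  "rhs2 lam mu th al thh ah eps d1 d2 x2 =
     lam *
       (exp (- th * d2 + al) /
        (exp (- (th + eps * thh) * d1 + (al + eps * ah)) + exp (- th * d2 + al)))
     - mu * x2"

definition coef_a :: "real \<Rightarrow> real \<Rightarrow> real \<Rightarrow> real \<Rightarrow> real \<Rightarrow> real \<Rightarrow> real \<Rightarrow> real" where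
  "coef_a lam mu th lh mh thh ah =
     (lam * th + 4 * mu) / (4 * mu * (lam * th + 2 * mu)) * lh
     - lam * (lam * th + 4 * mu) / (4 * mu^2 * (lam * th + 2 * mu)) * mh
     - lam^2 / (4 * mu * (lam * th + 2 * mu)) * thh
     + lam / (2 * (lam * th + 2 * mu)) * ah"

definition coef_b :: "real \<Rightarrow> real \<Rightarrow> real \<Rightarrow> real \<Rightarrow> real \<Rightarrow> real \<Rightarrow> real \<Rightarrow> real" where
  "coef_b lam mu th lh mh thh ah =
     lam * th / (4 * mu * (lam * th + 2 * mu)) * lh
     - lam^2 * th / (4 * mu^2 * (lam * th + 2 * mu)) * mh
     + lam^2 / (4 * mu * (lam * th + 2 * mu)) * thh
     - lam / (2 * (lam * th + 2 * mu)) * ah"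

end

theory Submission
  imports Defs "HOL-Real_Asymp.Real_Asymp"
begin

lemma L0:
  fixes lam mu th lh mh thh ah a b D :: real
  assumes mu: "mu \<noteq> 0" and DD: "D = lam*th+2*mu" and D: "D \<noteq> 0"
  and p: "a+b = lh/(2*mu) - lam*mh/(2*mu^2)"
  and m: "D*(a-b) = lh - lam/mu*mh - lam^2/(2*mu)*thh + lam*ah"
  shows "lh + lam*(ah - th*a - thh*(lam/(2*mu))) - 2*mh*(lam/(2*mu)) - 2*mu*a
     - mu*(lam/(2*mu))*((ah - th*a - thh*(lam/(2*mu))) + (- th*b)) = 0"
    and "lam*(- th*b) - 2*mu*b
     - mu*(lam/(2*mu))*((ah - th*a - thh*(lam/(2*mu))) + (- th*b)) = 0"
proof -
  have m': "a - b = (lh - lam/mu*mh - lam^2/(2*mu)*thh + lam*ah)/D" using m D by (simp add: field_simps)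
  define P where "P = lh/(2*mu) - lam*mh/(2*mu^2)"
  define M where "M = (lh - lam/mu*mh - lam^2/(2*mu)*thh + lam*ah)/D"
  have p': "a+b = P" using p unfolding P_def .
  have m'': "a-b = M" using m' unfolding M_def .
  have ea: "a = (P + M)/2" by (simp add: p'[symmetric] m''[symmetric])
  have eb: "b = (P - M)/2" by (simp add: p'[symmetric] m''[symmetric])
  show "lh + lam*(ah - th*a - thh*(lam/(2*mu))) - 2*mh*(lam/(2*mu)) - 2*mu*a
     - mu*(lam/(2*mu))*((ah - th*a - thh*(lam/(2*mu))) + (- th*b)) = 0"
    unfolding ea eb P_def M_def using mu D
    apply (simp add: field_simps power2_eq_square) apply (simp add: DD algebra_simps) done
  show "lam*(- th*b) - 2*mu*b
     - mu*(lam/(2*mu))*((ah - th*a - thh*(lam/(2*mu))) + (- th*b)) = 0"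
    unfolding ea eb P_def M_def using mu D
    apply (simp add: field_simps power2_eq_square) apply (simp add: DD algebra_simps) done
qed

lemma L1:
  fixes lam mu th lh mh thh ah :: real
  assumes "lam > 0" and "mu > 0" and "th > 0"
  shows "lh + lam*(ah - th*coef_a lam mu th lh mh thh ah - thh*(lam/(2*mu))) - 2*mh*(lam/(2*mu)) - 2*mu*coef_a lam mu th lh mh thh ah
     - mu*(lam/(2*mu))*((ah - th*coef_a lam mu th lh mh thh ah - thh*(lam/(2*mu))) + (- th*coef_b lam mu th lh mh thh ah)) = 0"
    and "lam*(- th*coef_b lam mu th lh mh thh ah) - 2*mu*coef_b lam mu th lh mh thh ah
     - mu*(lam/(2*mu))*((ah - th*coef_a lam mu th lh mh thh ah - thh*(lam/(2*mu))) + (- th*coef_b lam mu th lh mh thh ah)) = 0"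
proof -
  define D where "D = lam*th+2*mu"
  have "D > 0" using assms unfolding D_def by (simp add: add_pos_pos)
  hence D: "D \<noteq> 0" by simp
  have mu: "mu \<noteq> 0" using assms by simp
  have ca: "coef_a lam mu th lh mh thh ah = (lam * th + 4 * mu) / (4 * mu * D) * lh
     - lam * (lam * th + 4 * mu) / (4 * mu^2 * D) * mh
     - lam^2 / (4 * mu * D) * thh
     + lam / (2 * D) * ah" unfolding coef_a_def D_def ..
  have cb: "coef_b lam mu th lh mh thh ah = lam * th / (4 * mu * D) * lh
     - lam^2 * th / (4 * mu^2 * D) * mh
     + lam^2 / (4 * mu * D) * thh
     - lam / (2 * D) * ah" unfolding coef_b_def D_def ..
  have p: "coef_a lam mu th lh mh thh ah + coef_b lam mu th lh mh thh ah = lh/(2*mu) - lam*mh/(2*mu^2)"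
    unfolding ca cb using D mu
    by (simp add: field_simps power2_eq_square; simp add: D_def algebra_simps)
  have m: "D*(coef_a lam mu th lh mh thh ah - coef_b lam mu th lh mh thh ah) = lh - lam/mu*mh - lam^2/(2*mu)*thh + lam*ah"
    unfolding ca cb using D mu
    by (simp add: field_simps power2_eq_square; simp add: D_def algebra_simps)
  show "lh + lam*(ah - th*coef_a lam mu th lh mh thh ah - thh*(lam/(2*mu))) - 2*mh*(lam/(2*mu)) - 2*mu*coef_a lam mu th lh mh thh ah
     - mu*(lam/(2*mu))*((ah - th*coef_a lam mu th lh mh thh ah - thh*(lam/(2*mu))) + (- th*coef_b lam mu th lh mh thh ah)) = 0"
    by (rule L0(1)[OF mu D_def D p m])
  show "lam*(- th*coef_b lam mu th lh mh thh ah) - 2*mu*coef_b lam mu th lh mh thh ah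
     - mu*(lam/(2*mu))*((ah - th*coef_a lam mu th lh mh thh ah - thh*(lam/(2*mu))) + (- th*coef_b lam mu th lh mh thh ah)) = 0"
    by (rule L0(2)[OF mu D_def D p m])
qed
lemma alg1:
  fixes lam mu h e lh mh a U V s1 s2 :: real
  assumes "mu*h*2 = lam"
  shows "(lam+e*lh)*U - (mu+e*mh)*(h+a*e)*(U+V) =
     e*(lh + lam*s1 - 2*mh*h - 2*mu*a - mu*h*(s1+s2)) + e^2*(lh*s1 - 2*mh*a - (mh*h + mu*a)*(s1+s2))
     + e^3*(-mh*a*(s1+s2)) + (lam + e*lh - (mu+e*mh)*(h+a*e))*(U-1-e*s1) + (-(mu+e*mh)*(h+a*e))*(V-1-e*s2)"
  using assms[symmetric] by (simp add: algebra_simps power2_eq_square power3_eq_cube)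

lemma alg2:
  fixes lam mu h e b U V s1 s2 :: real
  assumes "mu*h*2 = lam"
  shows "lam*V - mu*(h+b*e)*(U+V) =
     e*(lam*s2 - 2*mu*b - mu*h*(s1+s2)) + e^2*(-mu*b*(s1+s2))
     + (-mu*(h+b*e))*(U-1-e*s1) + (lam - mu*(h+b*e))*(V-1-e*s2)"
  using assms[symmetric] by (simp add: algebra_simps power2_eq_square power3_eq_cube)

lemma frac1:
  fixes U V C X m q :: real
  assumes "U > 0" "V > 0" "C > 0"
  shows "X*(C*U/(C*U + C*V)) - m*q = (X*U - m*q*(U+V))/(U+V)"
proof -
  have eq: "C*U/(C*U + C*V) = U/(U+V)" using assms by (simp add: distrib_left[symmetric])
  have "U + V \<noteq> 0" using assms by simp
  then show ?thesis unfolding eq by (simp add: field_simps)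
qed

lemma frac2:
  fixes U V C X m q :: real
  assumes "U > 0" "V > 0" "C > 0"
  shows "X*(C*V/(C*U + C*V)) - m*q = (X*V - m*q*(U+V))/(U+V)"
proof -
  have eq: "C*V/(C*U + C*V) = V/(U+V)" using assms by (simp add: distrib_left[symmetric])
  have "U + V \<noteq> 0" using assms by simp
  then show ?thesis unfolding eq by (simp add: field_simps)
qed

theorem mainTheorem1:
  fixes lam mu th al lh mh thh ah :: real
  assumes "lam > 0" and "mu > 0" and "th > 0"
  defines "q1 \<equiv> \<lambda>eps::real. lam / (2 * mu) + coef_a lam mu th lh mh thh ah * eps"
      and "q2 \<equiv> \<lambda>eps::real. lam / (2 * mu) + coef_b lam mu th lh mh thh ah * eps"
  shows "((\<lambda>eps. rhs1 lam mu th al lh mh thh ah eps (q1 eps) (q2 eps) (q1 eps) (q2 eps))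
           \<in> O[at 0](\<lambda>eps. eps ^ 2)) \<and>
         ((\<lambda>eps. rhs2 lam mu th al thh ah eps (q1 eps) (q2 eps) (q2 eps))
           \<in> O[at 0](\<lambda>eps. eps ^ 2))"
proof -
  define h where "h = lam/(2*mu)"
  define a where "a = coef_a lam mu th lh mh thh ah"
  define b where "b = coef_b lam mu th lh mh thh ah"
  define s1 where "s1 = ah - th*a - thh*h"
  define t1 where "t1 = -thh*a"
  define s2 where "s2 = - th*b"
  define c where "c = al - th*h"
  have hmu: "mu*h*2 = lam" using assms unfolding h_def by simp
  have L1a: "lh + lam*s1 - 2*mh*h - 2*mu*a - mu*h*(s1+s2) = 0"
    unfolding s1_def s2_def a_def b_def h_def by (rule L1(1)[OF assms(1-3)])
  have L2a: "lam*s2 - 2*mu*b - mu*h*(s1+s2) = 0"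
    unfolding s1_def s2_def a_def b_def h_def by (rule L1(2)[OF assms(1-3)])
  have E1: "exp (- (th + e * thh) * (h + a*e) + (al + e * ah)) = exp c * exp (e*s1 + e^2*t1)" for e
  proof -
    have "- (th + e * thh) * (h + a*e) + (al + e * ah) = c + (e*s1 + e^2*t1)"
      unfolding c_def s1_def t1_def by (simp add: algebra_simps power2_eq_square)
    thus ?thesis by (simp add: exp_add)
  qed
  have E2: "exp (- th * (h + b*e) + al) = exp c * exp (e*s2)" for e
  proof -
    have "- th * (h + b*e) + al = c + e*s2"
      unfolding c_def s2_def by (simp add: algebra_simps)
    thus ?thesis by (simp add: exp_add)
  qed
  have q1e: "q1 = (\<lambda>e. h + a*e)" unfolding q1_def h_def a_def ..
  have q2e: "q2 = (\<lambda>e. h + b*e)" unfolding q2_def h_def b_def ..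
  have R1: "(\<lambda>e. rhs1 lam mu th al lh mh thh ah e (q1 e) (q2 e) (q1 e) (q2 e)) =
    (\<lambda>e. (e^2*(lh*s1 - 2*mh*a - (mh*h + mu*a)*(s1+s2)) + e^3*(-mh*a*(s1+s2))
       + (lam + e*lh - (mu+e*mh)*(h+a*e))*(exp (e*s1 + e^2*t1)-1-e*s1)
       + (-(mu+e*mh)*(h+a*e))*(exp (e*s2)-1-e*s2)) / (exp (e*s1 + e^2*t1) + exp (e*s2)))"
  proof
    fix e :: real
    have "rhs1 lam mu th al lh mh thh ah e (q1 e) (q2 e) (q1 e) (q2 e)
       = (lam + e*lh) * (exp c * exp (e*s1 + e^2*t1) / (exp c * exp (e*s1 + e^2*t1) + exp c * exp (e*s2)))
         - (mu + e*mh) * (h + a*e)"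
      unfolding rhs1_def q1e q2e E1 E2 ..
    also have "\<dots> = ((lam + e*lh) * exp (e*s1 + e^2*t1) - (mu + e*mh) * (h + a*e) * (exp (e*s1 + e^2*t1) + exp (e*s2)))
        / (exp (e*s1 + e^2*t1) + exp (e*s2))"
      by (rule frac1) auto
    also have "\<dots> = (e^2*(lh*s1 - 2*mh*a - (mh*h + mu*a)*(s1+s2)) + e^3*(-mh*a*(s1+s2))
       + (lam + e*lh - (mu+e*mh)*(h+a*e))*(exp (e*s1 + e^2*t1)-1-e*s1)
       + (-(mu+e*mh)*(h+a*e))*(exp (e*s2)-1-e*s2)) / (exp (e*s1 + e^2*t1) + exp (e*s2))" by (subst alg1[OF hmu, where ?s1.0=s1 and ?s2.0=s2]) (simp add: L1a)
    finally show "rhs1 lam mu th al lh mh thh ah e (q1 e) (q2 e) (q1 e) (q2 e) = (e^2*(lh*s1 - 2*mh*a - (mh*h + mu*a)*(s1+s2)) + e^3*(-mh*a*(s1+s2))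
       + (lam + e*lh - (mu+e*mh)*(h+a*e))*(exp (e*s1 + e^2*t1)-1-e*s1)
       + (-(mu+e*mh)*(h+a*e))*(exp (e*s2)-1-e*s2)) / (exp (e*s1 + e^2*t1) + exp (e*s2))" .
  qed
  have R2: "(\<lambda>e. rhs2 lam mu th al thh ah e (q1 e) (q2 e) (q2 e)) =
    (\<lambda>e. (e^2*(-mu*b*(s1+s2))
       + (-mu*(h+b*e))*(exp (e*s1 + e^2*t1)-1-e*s1)
       + (lam - mu*(h+b*e))*(exp (e*s2)-1-e*s2)) / (exp (e*s1 + e^2*t1) + exp (e*s2)))"
  proof
    fix e :: real
    have "rhs2 lam mu th al thh ah e (q1 e) (q2 e) (q2 e)
       = lam * (exp c * exp (e*s2) / (exp c * exp (e*s1 + e^2*t1) + exp c * exp (e*s2)))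
         - mu * (h + b*e)"
      unfolding rhs2_def q1e q2e E1 E2 ..
    also have "\<dots> = (lam * exp (e*s2) - mu * (h + b*e) * (exp (e*s1 + e^2*t1) + exp (e*s2)))
        / (exp (e*s1 + e^2*t1) + exp (e*s2))"
      by (rule frac2) auto
    also have "\<dots> = (e^2*(-mu*b*(s1+s2))
       + (-mu*(h+b*e))*(exp (e*s1 + e^2*t1)-1-e*s1)
       + (lam - mu*(h+b*e))*(exp (e*s2)-1-e*s2)) / (exp (e*s1 + e^2*t1) + exp (e*s2))" by (subst alg2[OF hmu, where ?s1.0=s1 and ?s2.0=s2]) (simp add: L2a)
    finally show "rhs2 lam mu th al thh ah e (q1 e) (q2 e) (q2 e) = (e^2*(-mu*b*(s1+s2))
       + (-mu*(h+b*e))*(exp (e*s1 + e^2*t1)-1-e*s1)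
       + (lam - mu*(h+b*e))*(exp (e*s2)-1-e*s2)) / (exp (e*s1 + e^2*t1) + exp (e*s2))" .
  qed
  show ?thesis unfolding R1 R2 by (intro conjI; real_asymp)
qed
end
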